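(* For every $a\in C\ell_{1,2}$, $\det(L(a))=\det(R(a))=(N(a)^2+4T(a)^2)^2=P(a)^2$.
   Context: $C\ell_{1,2}$ is the real Clifford algebra generated by $i_1,i_2,i_3$ with $i_1^2=1$, $i_2^2=i_3^2=-1$ and $i_ti_m=-i_mi_t$ for $t\neq m$, with real basis $e_0=1$, $e_1=i_1$, $e_2=i_2$, $e_3=i_1i_2$, $e_4=i_3$, $e_5=i_1i_3$, $e_6=i_2i_3$, $e_7=i_1i_2i_3$. For $x=\sum_{t=0}^7x_te_t$ write $\overrightarrow{x}=(x_0,\dots,x_7)^T\in\mathbb{R}^8$. For $a\in C\ell_{1,2}$, $L(a)$ and $R(a)$ are the real $8\times8$ matrices with $\overrightarrow{ax}=L(a)\overrightarrow{x}$ and $\overrightarrow{xa}=R(a)\overrightarrow{x}$ for all $x$. For $a=\sum a_te_t$: $N(a)=a_0^2-a_1^2+a_2^2-a_3^2+a_4^2-a_5^2+a_6^2-a_7^2$, $T(a)=a_0a_7+a_2a_5-a_1a_6-a_3a_4$, $P(a)=N(a)^2+4T(a)^2$. *)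

theory Defs
  imports "HOL-Analysis.Analysis" "HOL-Library.Numeral_Type"
begin

text \<open>Elements of Cl_{1,2} are identified with their coordinate vectors in R^8
  w.r.t. the basis e_0,...,e_7. The basis element e_t corresponds to the bitmask t:
  bit 0 = i1, bit 1 = i2, bit 2 = i3 (so e_3 = i1 i2, e_5 = i1 i3, e_6 = i2 i3, e_7 = i1 i2 i3).\<close>

type_synonym cl12 = "real ^ 8"

definition coord :: "cl12 \<Rightarrow> nat \<Rightarrow> real" where
  "coord x t = x $ (of_nat t :: 8)"

definition gen_sq :: "nat \<Rightarrow> real" where
  "gen_sq b = (if b = 0 then 1 else -1)"

text \<open>Sign of the product of basis blades e_A e_B = blade_sign A B * e_(A xor B):
  anticommutation swaps plus squares of common generators.\<close>
definition blade_sign :: "nat \<Rightarrow> nat \<Rightarrow> real" where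
  "blade_sign A B =
     (-1) ^ card {(a, b). a < 3 \<and> b < 3 \<and> bit A a \<and> bit B b \<and> b < a}
     * (\<Prod>b\<in>{b. b < 3 \<and> bit A b \<and> bit B b}. gen_sq b)"

definition basis_cl :: "nat \<Rightarrow> cl12" where
  "basis_cl t = (\<chi> k. if k = (of_nat t :: 8) then 1 else 0)"

definition clmul :: "cl12 \<Rightarrow> cl12 \<Rightarrow> cl12" where
  "clmul x y = (\<Sum>i<8. \<Sum>j<8. (coord x i * coord y j * blade_sign i j) *\<^sub>R basis_cl (xor i j))"

definition Lmat :: "cl12 \<Rightarrow> real ^ 8 ^ 8" where
  "Lmat a = matrix (\<lambda>x. clmul a x)"

definition Rmat :: "cl12 \<Rightarrow> real ^ 8 ^ 8" where
  "Rmat a = matrix (\<lambda>x. clmul x a)"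

definition Nf :: "cl12 \<Rightarrow> real" where
  "Nf a = (coord a 0)^2 - (coord a 1)^2 + (coord a 2)^2 - (coord a 3)^2
         + (coord a 4)^2 - (coord a 5)^2 + (coord a 6)^2 - (coord a 7)^2"

definition Tf :: "cl12 \<Rightarrow> real" where
  "Tf a = coord a 0 * coord a 7 + coord a 2 * coord a 5 - coord a 1 * coord a 6 - coord a 3 * coord a 4"

definition Pf :: "cl12 \<Rightarrow> real" where
  "Pf a = (Nf a)^2 + 4 * (Tf a)^2"

end

theory Submission imports Defs "Jordan_Normal_Form.Determinant" begin
hide_const (open) Determinant.det
no_notation Matrix.vec_index (infixl "$" 100)

lemma lt8_cases: "(n::nat) < 8 \<Longrightarrow> n = 0 \<or> n = 1 \<or> n = 2 \<or> n = 3 \<or> n = 4 \<or> n = 5 \<or> n = 6 \<or> n = 7"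
  by auto

lemma inj8: "inj_on (of_nat :: nat \<Rightarrow> 8) {0..<8}"
  unfolding inj_on_def
proof (intro ballI impI)
  fix x y :: nat assume "x \<in> {0..<8}" "y \<in> {0..<8}" "(of_nat x :: 8) = of_nat y"
  then show "x = y" using lt8_cases[of x] lt8_cases[of y] by auto
qed

lemma bij8: "bij_betw (of_nat :: nat \<Rightarrow> 8) {0..<8} UNIV"
proof -
  have "card ((of_nat :: nat \<Rightarrow> 8) ` {0..<8}) = 8"
    using inj8 by (simp add: card_image)
  then have "(of_nat :: nat \<Rightarrow> 8) ` {0..<8} = UNIV"
    by (intro card_subset_eq) auto
  then show ?thesis using inj8 by (simp add: bij_betw_def)
qed

definition h8 :: "nat \<Rightarrow> 8" where "h8 = of_nat"
definition g8 :: "8 \<Rightarrow> nat" where "g8 = inv_into {0..<8} h8"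

lemma h8_bij: "bij_betw h8 {0..<8} UNIV" using bij8 by (simp add: h8_def)
lemma g8_bij: "bij_betw g8 UNIV {0..<8}" unfolding g8_def using h8_bij by (rule bij_betw_inv_into)
lemma h8_g8[simp]: "h8 (g8 i) = i" unfolding g8_def using h8_bij
  by (simp add: bij_betw_inv_into_right)
lemma g8_h8[simp]: "n < 8 \<Longrightarrow> g8 (h8 n) = n" unfolding g8_def using h8_bij
  by (simp add: bij_betw_inv_into_left)

lemma det_bridge:
  fixes A :: "real^8^8"
  shows "det A = Determinant.det (Matrix.mat 8 8 (\<lambda>(i,j). A $ h8 i $ h8 j))"
proof -
  let ?M = "Matrix.mat 8 8 (\<lambda>(i,j). A $ h8 i $ h8 j)"
  have "Determinant.det ?M = (\<Sum>q\<in>{q. q permutes {0..<8}}. of_int (sign q) * (\<Prod>n=0..<8. A $ h8 n $ h8 (q n)))"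
    unfolding Determinant.det_def dim_row_mat dim_col_mat
    apply (subst if_P, rule refl)
    apply (intro sum.cong refl arg_cong2[where f="(*)"] prod.cong)
    apply (auto simp: permutes_in_image)
    done
  also have "\<dots> = (\<Sum>p\<in>{p. p permutes (UNIV::8 set)}. of_int (sign p) * (\<Prod>i\<in>UNIV. A $ i $ p i))"
  proof (rule sym)
   show "(\<Sum>p\<in>{p. p permutes (UNIV::8 set)}. of_int (sign p) * (\<Prod>i\<in>UNIV. A $ i $ p i)) = (\<Sum>q\<in>{q. q permutes {0..<8}}. of_int (sign q) * (\<Prod>n=0..<8. A $ h8 n $ h8 (q n)))"
  proof (rule sum.reindex_bij_witness[where j = "map_permutation UNIV g8" and i = "map_permutation {0..<8} h8"])
    fix p :: "8 \<Rightarrow> 8" assume p: "p \<in> {p. p permutes UNIV}"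
    show "map_permutation {0..<8} h8 (map_permutation UNIV g8 p) = p"
      using p g8_bij by (auto intro!: map_permutation_compose_inv)
    show "map_permutation UNIV g8 p \<in> {q. q permutes {0..<8}}"
      using p g8_bij by (auto intro!: map_permutation_permutes)
    let ?q = "map_permutation UNIV g8 p"
    have sq: "sign ?q = sign p"
      using p g8_bij by (intro sign_map_permutation) (auto simp: bij_betw_def)
    have qn: "h8 (?q n) = p (h8 n)" if "n < 8" for n
    proof -
      have "?q n = ?q (g8 (h8 n))" using that by simp
      also have "\<dots> = g8 (p (h8 n))" using g8_bij by (intro map_permutation_apply) (auto simp: bij_betw_def)
      finally show ?thesis by simp
    qed
    have "(\<Prod>n=0..<8. A $ h8 n $ h8 (?q n)) = (\<Prod>n=0..<8. A $ h8 n $ p (h8 n))"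
      by (intro prod.cong refl) (simp add: qn)
    also have "\<dots> = (\<Prod>i\<in>UNIV. A $ i $ p i)"
      using h8_bij by (rule prod.reindex_bij_betw)
    finally show "of_int (sign ?q) * (\<Prod>n=0..<8. A $ h8 n $ h8 (?q n)) = of_int (sign p) * (\<Prod>i\<in>UNIV. A $ i $ p i)"
      using sq by simp
  next
    fix q assume q: "q \<in> {q. q permutes {0..<(8::nat)}}"
    show "map_permutation UNIV g8 (map_permutation {0..<8} h8 q) = q"
      using q h8_bij by (auto intro!: map_permutation_compose_inv)
    show "map_permutation {0..<8} h8 q \<in> {p. p permutes UNIV}"
      using q h8_bij by (auto intro!: map_permutation_permutes)
  qed
  qed
  finally show ?thesis unfolding Determinants.det_def by simp
qed


lemma lt3: "(a::nat) < 3 \<longleftrightarrow> a = 0 \<or> a = 1 \<or> a = 2" by auto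
lemma pairs3: "{(a::nat, b::nat). a < 3 \<and> b < 3 \<and> P a b} = set (filter (\<lambda>(a,b). P a b) [(0,0),(0,1),(0,2),(1,0),(1,1),(1,2),(2,0),(2,1),(2,2)])"
  by (auto simp: lt3 intro!: Nat.gr0I)
lemma singles3: "{b::nat. b < 3 \<and> P b} = set (filter P [0,1,2])"
  by (auto simp: lt3 intro!: Nat.gr0I)
lemma bs_alt: "blade_sign A B = (-1) ^ length (filter (\<lambda>(a,b). bit A a \<and> bit B b \<and> b < a) [(0,0),(0,1),(0,2),(1,0),(1,1),(1,2),(2,0),(2,1),(2,2)])
   * prod_list (map gen_sq (filter (\<lambda>b. bit A b \<and> bit B b) [0,1,2]))"
  unfolding blade_sign_def pairs3 singles3 
  by (subst distinct_card, simp, subst prod.distinct_set_conv_list, simp, rule refl)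

lemma sum8: "(\<Sum>k\<in>{0..<8::nat}. f k) = f 0 + f 1 + f 2 + f 3 + f 4 + f 5 + f 6 + f 7"
  by (simp add: eval_nat_numeral)
definition stbl :: "real list list" where "stbl = [[1, 1, 1, 1, 1, 1, 1, 1], [1, 1, 1, 1, 1, 1, 1, 1], [1, -1, -1, 1, 1, -1, -1, 1], [1, -1, -1, 1, 1, -1, -1, 1], [1, -1, -1, 1, -1, 1, 1, -1], [1, -1, -1, 1, -1, 1, 1, -1], [1, 1, 1, 1, -1, -1, -1, -1], [1, 1, 1, 1, -1, -1, -1, -1]]"

lemma bs_tbl: assumes "i < 8" "j < 8" shows "blade_sign i j = stbl ! i ! j"
  using lt8_cases[OF assms(1)] lt8_cases[OF assms(2)]
  by (elim disjE) (simp_all add: bs_alt gen_sq_def bit_iff_odd stbl_def)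
lemma xor8: "i < 8 \<Longrightarrow> j < 8 \<Longrightarrow> xor i j < (8::nat)"
  using lt8_cases[of i] lt8_cases[of j] by auto

lemma xor_eq_iff_nat: "xor (k::nat) j = i \<longleftrightarrow> k = xor i j"
  by (metis xor.assoc xor_self_eq xor.right_neutral xor.commute)

lemma h8_eq_iff: "i < 8 \<Longrightarrow> j < 8 \<Longrightarrow> h8 i = h8 j \<longleftrightarrow> i = j"
  using inj8 unfolding h8_def inj_on_def by auto

lemma coord_axis: "l < 8 \<Longrightarrow> j < 8 \<Longrightarrow> coord (axis (h8 j) 1) l = (if l = j then 1 else 0)"
  unfolding coord_def axis_def using h8_eq_iff[of l j] by (simp add: h8_def)

lemma basis_nth: "m < 8 \<Longrightarrow> i < 8 \<Longrightarrow> basis_cl m $ h8 i = (if m = i then 1 else 0)"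
  unfolding basis_cl_def using h8_eq_iff[of m i] by (auto simp: h8_def)

lemma inner_sum: assumes "j < 8"
  shows "(\<Sum>l<8. F l * coord (axis (h8 j) 1) l) = F j"
proof -
  have "(\<Sum>l<8. F l * coord (axis (h8 j) 1) l) = (\<Sum>l<8. if l = j then F l else 0)"
    using assms by (intro sum.cong refl) (simp add: coord_axis)
  also have "\<dots> = F j" using assms by simp
  finally show ?thesis .
qed

lemma basis_sum: assumes "i < 8" "j < 8"
  shows "(\<Sum>k<8. G k * (basis_cl (xor k j) $ h8 i)) = G (xor i j)"
proof -
  have "(\<Sum>k<8. G k * (basis_cl (xor k j) $ h8 i)) = (\<Sum>k<8. if k = xor i j then G k else 0)"
    using assms by (intro sum.cong refl) (simp add: basis_nth xor8 xor_eq_iff_nat)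
  also have "\<dots> = G (xor i j)" using assms xor8 by simp
  finally show ?thesis .
qed

lemma Lmat_entry: assumes "i < 8" "j < 8"
  shows "Lmat a $ h8 i $ h8 j = coord a (xor i j) * blade_sign (xor i j) j"
proof -
  have "Lmat a $ h8 i $ h8 j = (\<Sum>k<8. \<Sum>l<8. (coord a k * blade_sign k l * (basis_cl (xor k l) $ h8 i)) * coord (axis (h8 j) 1) l)"
    unfolding Lmat_def matrix_def clmul_def by (simp add: ac_simps)
  also have "\<dots> = (\<Sum>k<8. (coord a k * blade_sign k j) * (basis_cl (xor k j) $ h8 i))"
    using assms by (intro sum.cong refl) (simp only: inner_sum)
  also have "\<dots> = coord a (xor i j) * blade_sign (xor i j) j"
    using assms by (rule basis_sum)
  finally show ?thesis .
qed

lemma Rmat_entry: assumes "i < 8" "j < 8"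
  shows "Rmat a $ h8 i $ h8 j = coord a (xor i j) * blade_sign j (xor i j)"
proof -
  have "Rmat a $ h8 i $ h8 j = (\<Sum>l<8. \<Sum>k<8. (coord a l * blade_sign k l * (basis_cl (xor l k) $ h8 i)) * coord (axis (h8 j) 1) k)"
    unfolding Rmat_def matrix_def clmul_def by (subst sum.swap) (simp add: ac_simps xor.commute)
  also have "\<dots> = (\<Sum>l<8. (coord a l * blade_sign j l) * (basis_cl (xor l j) $ h8 i))"
    using assms by (intro sum.cong refl) (simp only: inner_sum)
  also have "\<dots> = coord a (xor i j) * blade_sign j (xor i j)"
    using assms by (rule basis_sum)
  finally show ?thesis .
qed

definition cf :: "real \<Rightarrow> real \<Rightarrow> real mat" where
  "cf x y = Matrix.mat 2 2 (\<lambda>(i,j). if i = j then x else if i = 0 then - y else y)"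

lemma cf_carrier[simp]: "cf x y \<in> carrier_mat 2 2" by (simp add: cf_def)
lemma cf_dims[simp]: "dim_row (cf x y) = 2" "dim_col (cf x y) = 2" by (simp_all add: cf_def)

lemma lt2_cases: "(n::nat) < 2 \<Longrightarrow> n = 0 \<or> n = 1" by auto

lemma sum2: "(\<Sum>k\<in>{0..<2::nat}. f k) = f 0 + f 1"
  by (simp add: eval_nat_numeral)

lemma cf_mult: "cf x y * cf u w = cf (x*u - y* w) (x* w + y*u)"
proof (rule eq_matI)
  fix i j assume "i < dim_row (cf (x*u - y* w) (x* w + y*u))" "j < dim_col (cf (x*u - y* w) (x* w + y*u))"
  hence i: "i < 2" and j: "j < 2" by simp_all
  show "(cf x y * cf u w) $$ (i, j) = cf (x*u - y* w) (x* w + y*u) $$ (i, j)"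
    using lt2_cases[OF i] lt2_cases[OF j] i j
    by (elim disjE) (simp_all add: cf_def scalar_prod_def sum2 algebra_simps)
qed simp_all

lemma cf_minus: "cf x y - cf u w = cf (x - u) (y - w)"
  by (rule eq_matI) (auto simp: cf_def)

lemma det_mat1: "Determinant.det (Matrix.mat 1 1 f) = f (0,0)"
  by (subst det_single) auto

lemma det_cf: "Determinant.det (cf x y) = x^2 + y^2"
proof -
  have m0: "mat_delete (cf x y) 0 0 = Matrix.mat 1 1 (\<lambda>_. x)"
    by (rule eq_matI) (auto simp: mat_delete_def cf_def)
  have m1: "mat_delete (cf x y) 1 0 = Matrix.mat 1 1 (\<lambda>_. - y)"
    by (rule eq_matI) (auto simp: mat_delete_def cf_def)
  have e: "cf x y $$ (0,0) = x" "cf x y $$ (1,0) = y" by (simp_all add: cf_def)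
  have "Determinant.det (cf x y) = (\<Sum>i<2. cf x y $$ (i,0) * cofactor (cf x y) i 0)"
    by (rule laplace_expansion_column[OF cf_carrier]) simp
  also have "\<dots> = cf x y $$ (0,0) * cofactor (cf x y) 0 0 + cf x y $$ (1,0) * cofactor (cf x y) 1 0"
    by (simp add: eval_nat_numeral)
  also have "\<dots> = x^2 + y^2"
    unfolding cofactor_def m0 m1 det_mat1 e by (simp add: power2_eq_square)
  finally show ?thesis .
qed

lemma det4cf: "Determinant.det (four_block_mat (cf x1 y1) (cf x2 y2) (cf x3 y3) (cf x4 y4))
  = (x1*x4 - y1*y4 - (x2*x3 - y2*y3))^2 + (x1*y4 + y1*x4 - (x2*y3 + y2*x3))^2"
proof -
  have "Determinant.det (four_block_mat (cf x1 y1) (cf x2 y2) (cf x3 y3) (cf x4 y4))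
     = Determinant.det (cf x1 y1 * cf x4 y4 - cf x2 y2 * cf x3 y3)"
    by (rule det_four_block_mat[where n=2]) (simp_all add: cf_mult algebra_simps)
  also have "\<dots> = (x1*x4 - y1*y4 - (x2*x3 - y2*y3))^2 + (x1*y4 + y1*x4 - (x2*y3 + y2*x3))^2"
    by (simp add: cf_mult cf_minus det_cf)
  finally show ?thesis .
qed
definition SLl :: "real list list" where "SLl = [[1, 0, 0, 0, 1, 0, 0, 0], [1, 0, 0, 0, (-1), 0, 0, 0], [0, 0, 1, 0, 0, 0, 1, 0], [0, 0, (-1), 0, 0, 0, 1, 0], [0, 0, 0, (-1), 0, 0, 0, 1], [0, 0, 0, 1, 0, 0, 0, 1], [0, 1, 0, 0, 0, (-1), 0, 0], [0, 1, 0, 0, 0, 1, 0, 0]]"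

definition SL :: "real mat" where "SL = Matrix.mat 8 8 (\<lambda>(i,j). SLl ! i ! j)"

lemma SL_idx: "i < 8 \<Longrightarrow> j < 8 \<Longrightarrow> SL $$ (i,j) = SLl ! i ! j" by (simp add: SL_def)

lemma SL_carrier: "SL \<in> carrier_mat 8 8" by (simp add: SL_def)

definition SLil :: "real list list" where "SLil = [[(1/2), (1/2), 0, 0, 0, 0, 0, 0], [0, 0, 0, 0, 0, 0, (1/2), (1/2)], [0, 0, (1/2), (-1/2), 0, 0, 0, 0], [0, 0, 0, 0, (-1/2), (1/2), 0, 0], [(1/2), (-1/2), 0, 0, 0, 0, 0, 0], [0, 0, 0, 0, 0, 0, (-1/2), (1/2)], [0, 0, (1/2), (1/2), 0, 0, 0, 0], [0, 0, 0, 0, (1/2), (1/2), 0, 0]]"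

definition SLi :: "real mat" where "SLi = Matrix.mat 8 8 (\<lambda>(i,j). SLil ! i ! j)"

lemma SLi_idx: "i < 8 \<Longrightarrow> j < 8 \<Longrightarrow> SLi $$ (i,j) = SLil ! i ! j" by (simp add: SLi_def)

lemma SLi_carrier: "SLi \<in> carrier_mat 8 8" by (simp add: SLi_def)

definition DLl :: "cl12 \<Rightarrow> real list list" where "DLl a = [[(coord a 0 + coord a 1), (- coord a 6 - coord a 7), (- coord a 2 - coord a 3), (coord a 4 + coord a 5), (0), (0), (0), (0)], [(coord a 6 + coord a 7), (coord a 0 + coord a 1), (- coord a 4 - coord a 5), (- coord a 2 - coord a 3), (0), (0), (0), (0)], [(coord a 2 - coord a 3), (coord a 4 - coord a 5), (coord a 0 - coord a 1), (coord a 6 - coord a 7), (0), (0), (0), (0)], [(- coord a 4 + coord a 5), (coord a 2 - coord a 3), (- coord a 6 + coord a 7), (coord a 0 - coord a 1), (0), (0), (0), (0)], [(0), (0), (0), (0), (coord a 0 - coord a 1), (coord a 6 - coord a 7), (- coord a 2 + coord a 3), (- coord a 4 + coord a 5)], [(0), (0), (0), (0), (- coord a 6 + coord a 7), (coord a 0 - coord a 1), (coord a 4 - coord a 5), (- coord a 2 + coord a 3)], [(0), (0), (0), (0), (coord a 2 + coord a 3), (- coord a 4 - coord a 5), (coord a 0 + coord a 1), (- coord a 6 - coord a 7)], [(0), (0), (0), (0), (coord a 4 + coord a 5), (coord a 2 + coord a 3), (coord a 6 + coord a 7), (coord a 0 + coord a 1)]]"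

definition DL :: "cl12 \<Rightarrow> real mat" where "DL a = Matrix.mat 8 8 (\<lambda>(i,j). DLl a ! i ! j)"

lemma DL_idx: "i < 8 \<Longrightarrow> j < 8 \<Longrightarrow> DL a $$ (i,j) = DLl a ! i ! j" by (simp add: DL_def)

lemma DL_carrier: "DL a \<in> carrier_mat 8 8" by (simp add: DL_def)

definition PL1 :: "cl12 \<Rightarrow> real mat" where "PL1 a = (four_block_mat (cf (coord a 0 + coord a 1) (coord a 6 + coord a 7)) (cf (- coord a 2 - coord a 3) (- coord a 4 - coord a 5)) (cf (coord a 2 - coord a 3) (- coord a 4 + coord a 5)) (cf (coord a 0 - coord a 1) (- coord a 6 + coord a 7)))"

definition PL2 :: "cl12 \<Rightarrow> real mat" where "PL2 a = (four_block_mat (cf (coord a 0 - coord a 1) (- coord a 6 + coord a 7)) (cf (- coord a 2 + coord a 3) (coord a 4 - coord a 5)) (cf (coord a 2 + coord a 3) (coord a 4 + coord a 5)) (cf (coord a 0 + coord a 1) (coord a 6 + coord a 7)))"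

definition BL :: "cl12 \<Rightarrow> real mat" where "BL a = four_block_mat (PL1 a) (0\<^sub>m 4 4) (0\<^sub>m 4 4) (PL2 a)"

definition SRl :: "real list list" where "SRl = [[1, 0, 0, 0, 1, 0, 0, 0], [1, 0, 0, 0, (-1), 0, 0, 0], [0, 0, 1, 0, 0, 0, 1, 0], [0, 0, 1, 0, 0, 0, (-1), 0], [0, 0, 0, 1, 0, 0, 0, (-1)], [0, 0, 0, 1, 0, 0, 0, 1], [0, 1, 0, 0, 0, (-1), 0, 0], [0, 1, 0, 0, 0, 1, 0, 0]]"

definition SR :: "real mat" where "SR = Matrix.mat 8 8 (\<lambda>(i,j). SRl ! i ! j)"

lemma SR_idx: "i < 8 \<Longrightarrow> j < 8 \<Longrightarrow> SR $$ (i,j) = SRl ! i ! j" by (simp add: SR_def)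

lemma SR_carrier: "SR \<in> carrier_mat 8 8" by (simp add: SR_def)

definition SRil :: "real list list" where "SRil = [[(1/2), (1/2), 0, 0, 0, 0, 0, 0], [0, 0, 0, 0, 0, 0, (1/2), (1/2)], [0, 0, (1/2), (1/2), 0, 0, 0, 0], [0, 0, 0, 0, (1/2), (1/2), 0, 0], [(1/2), (-1/2), 0, 0, 0, 0, 0, 0], [0, 0, 0, 0, 0, 0, (-1/2), (1/2)], [0, 0, (1/2), (-1/2), 0, 0, 0, 0], [0, 0, 0, 0, (-1/2), (1/2), 0, 0]]"

definition SRi :: "real mat" where "SRi = Matrix.mat 8 8 (\<lambda>(i,j). SRil ! i ! j)"

lemma SRi_idx: "i < 8 \<Longrightarrow> j < 8 \<Longrightarrow> SRi $$ (i,j) = SRil ! i ! j" by (simp add: SRi_def)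

lemma SRi_carrier: "SRi \<in> carrier_mat 8 8" by (simp add: SRi_def)

definition DRl :: "cl12 \<Rightarrow> real list list" where "DRl a = [[(coord a 0 + coord a 1), (- coord a 6 - coord a 7), (- coord a 2 + coord a 3), (- coord a 4 + coord a 5), (0), (0), (0), (0)], [(coord a 6 + coord a 7), (coord a 0 + coord a 1), (coord a 4 - coord a 5), (- coord a 2 + coord a 3), (0), (0), (0), (0)], [(coord a 2 + coord a 3), (- coord a 4 - coord a 5), (coord a 0 - coord a 1), (coord a 6 - coord a 7), (0), (0), (0), (0)], [(coord a 4 + coord a 5), (coord a 2 + coord a 3), (- coord a 6 + coord a 7), (coord a 0 - coord a 1), (0), (0), (0), (0)], [(0), (0), (0), (0), (coord a 0 - coord a 1), (coord a 6 - coord a 7), (- coord a 2 - coord a 3), (coord a 4 + coord a 5)], [(0), (0), (0), (0), (- coord a 6 + coord a 7), (coord a 0 - coord a 1), (- coord a 4 - coord a 5), (- coord a 2 - coord a 3)], [(0), (0), (0), (0), (coord a 2 - coord a 3), (coord a 4 - coord a 5), (coord a 0 + coord a 1), (- coord a 6 - coord a 7)], [(0), (0), (0), (0), (- coord a 4 + coord a 5), (coord a 2 - coord a 3), (coord a 6 + coord a 7), (coord a 0 + coord a 1)]]"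

definition DR :: "cl12 \<Rightarrow> real mat" where "DR a = Matrix.mat 8 8 (\<lambda>(i,j). DRl a ! i ! j)"

lemma DR_idx: "i < 8 \<Longrightarrow> j < 8 \<Longrightarrow> DR a $$ (i,j) = DRl a ! i ! j" by (simp add: DR_def)

lemma DR_carrier: "DR a \<in> carrier_mat 8 8" by (simp add: DR_def)

definition PR1 :: "cl12 \<Rightarrow> real mat" where "PR1 a = (four_block_mat (cf (coord a 0 + coord a 1) (coord a 6 + coord a 7)) (cf (- coord a 2 + coord a 3) (coord a 4 - coord a 5)) (cf (coord a 2 + coord a 3) (coord a 4 + coord a 5)) (cf (coord a 0 - coord a 1) (- coord a 6 + coord a 7)))"

definition PR2 :: "cl12 \<Rightarrow> real mat" where "PR2 a = (four_block_mat (cf (coord a 0 - coord a 1) (- coord a 6 + coord a 7)) (cf (- coord a 2 - coord a 3) (- coord a 4 - coord a 5)) (cf (coord a 2 - coord a 3) (- coord a 4 + coord a 5)) (cf (coord a 0 + coord a 1) (coord a 6 + coord a 7)))"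

definition BR :: "cl12 \<Rightarrow> real mat" where "BR a = four_block_mat (PR1 a) (0\<^sub>m 4 4) (0\<^sub>m 4 4) (PR2 a)"

lemma all8: "(\<forall>i<8. P i) \<longleftrightarrow> P 0 \<and> P 1 \<and> P 2 \<and> P 3 \<and> P 4 \<and> P 5 \<and> P 6 \<and> P (7::nat)"
proof
  assume "\<forall>i<8. P i" thus "P 0 \<and> P 1 \<and> P 2 \<and> P 3 \<and> P 4 \<and> P 5 \<and> P 6 \<and> P 7" by simp
next
  assume h: "P 0 \<and> P 1 \<and> P 2 \<and> P 3 \<and> P 4 \<and> P 5 \<and> P 6 \<and> P 7"
  show "\<forall>i<8. P i"
  proof (intro allI impI)
    fix i :: nat assume "i < 8"
    from lt8_cases[OF this] show "P i" using h by (elim disjE) simp_all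
  qed
qed

lemma mat8_eqI: assumes "A \<in> carrier_mat 8 8" "B \<in> carrier_mat 8 8"
  "\<forall>i<8. \<forall>j<8. A $$ (i,j) = B $$ (i,j)" shows "A = B"
  using assms by (intro eq_matI) auto

lemma mult8: assumes "A \<in> carrier_mat 8 8" "B \<in> carrier_mat 8 8" "i < 8" "j < 8"
  shows "(A * B) $$ (i,j) =
   A $$ (i,0) * B $$ (0,j) + A $$ (i,1) * B $$ (1,j) + A $$ (i,2) * B $$ (2,j) + A $$ (i,3) * B $$ (3,j) +
   A $$ (i,4) * B $$ (4,j) + A $$ (i,5) * B $$ (5,j) + A $$ (i,6) * B $$ (6,j) + A $$ (i,7) * B $$ (7,j)"
  using assms by (simp add: scalar_prod_def sum8)

definition LMx :: "cl12 \<Rightarrow> real mat" where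
  "LMx a = Matrix.mat 8 8 (\<lambda>(i,j). coord a (xor i j) * stbl ! (xor i j) ! j)"
lemma LMx_idx: "i < 8 \<Longrightarrow> j < 8 \<Longrightarrow> LMx a $$ (i,j) = coord a (xor i j) * stbl ! (xor i j) ! j"
  by (simp add: LMx_def)
lemma LMx_carrier: "LMx a \<in> carrier_mat 8 8" by (simp add: LMx_def)

definition RMx :: "cl12 \<Rightarrow> real mat" where
  "RMx a = Matrix.mat 8 8 (\<lambda>(i,j). coord a (xor i j) * stbl ! j ! (xor i j))"
lemma RMx_idx: "i < 8 \<Longrightarrow> j < 8 \<Longrightarrow> RMx a $$ (i,j) = coord a (xor i j) * stbl ! j ! (xor i j)"
  by (simp add: RMx_def)
lemma RMx_carrier: "RMx a \<in> carrier_mat 8 8" by (simp add: RMx_def)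

lemma SLi_SL: "SLi * SL = 1\<^sub>m 8"
  apply (rule mat8_eqI)
    apply (rule mult_carrier_mat[OF SLi_carrier SL_carrier])
   apply simp
  unfolding all8
  apply (intro conjI)
  apply (simp_all add: mult8 SLi_carrier SL_carrier SLi_idx SL_idx SLil_def SLl_def del: index_mult_mat)
  done

lemma SRi_SR: "SRi * SR = 1\<^sub>m 8"
  apply (rule mat8_eqI)
    apply (rule mult_carrier_mat[OF SRi_carrier SR_carrier])
   apply simp
  unfolding all8
  apply (intro conjI)
  apply (simp_all add: mult8 SRi_carrier SR_carrier SRi_idx SR_idx SRil_def SRl_def del: index_mult_mat)
  done

lemma LS: "LMx a * SL = SL * DL a"
  apply (rule mat8_eqI)
    apply (rule mult_carrier_mat[OF LMx_carrier SL_carrier])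
   apply (rule mult_carrier_mat[OF SL_carrier DL_carrier])
  unfolding all8
  apply (intro conjI)
  apply (simp_all add: mult8 LMx_carrier SL_carrier DL_carrier LMx_idx SL_idx DL_idx SLl_def DLl_def stbl_def del: index_mult_mat)
  apply (simp_all add: eval_nat_numeral)
  done

lemma RS: "RMx a * SR = SR * DR a"
  apply (rule mat8_eqI)
    apply (rule mult_carrier_mat[OF RMx_carrier SR_carrier])
   apply (rule mult_carrier_mat[OF SR_carrier DR_carrier])
  unfolding all8
  apply (intro conjI)
  apply (simp_all add: mult8 RMx_carrier SR_carrier DR_carrier RMx_idx SR_idx DR_idx SRl_def DRl_def stbl_def del: index_mult_mat)
  apply (simp_all add: eval_nat_numeral)
  done

lemma PL_carrier: "PL1 a \<in> carrier_mat 4 4" "PL2 a \<in> carrier_mat 4 4"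
  "PR1 a \<in> carrier_mat 4 4" "PR2 a \<in> carrier_mat 4 4"
  unfolding PL1_def PL2_def PR1_def PR2_def by (auto intro!: four_block_carrier_mat)
lemma BL_carrier: "BL a \<in> carrier_mat 8 8"
  unfolding BL_def using four_block_carrier_mat[OF PL_carrier(1) PL_carrier(2)] by simp
lemma BR_carrier: "BR a \<in> carrier_mat 8 8"
  unfolding BR_def using four_block_carrier_mat[OF PL_carrier(3) PL_carrier(4)] by simp
lemma DL_BL_entries: "\<forall>i<8. \<forall>j<8. DL a $$ (i,j) = BL a $$ (i,j)"
  unfolding all8
  apply (intro conjI)
  apply (simp_all add: DL_idx DLl_def BL_def PL1_def PL2_def cf_def)
  done
lemma DR_BR_entries: "\<forall>i<8. \<forall>j<8. DR a $$ (i,j) = BR a $$ (i,j)"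
  unfolding all8
  apply (intro conjI)
  apply (simp_all add: DR_idx DRl_def BR_def PR1_def PR2_def cf_def)
  done

lemma det_SL_nz: "Determinant.det SL \<noteq> 0"
proof -
  have "Determinant.det SLi * Determinant.det SL = 1"
    using det_mult[OF SLi_carrier SL_carrier] SLi_SL by simp
  thus ?thesis by auto
qed
lemma det_SR_nz: "Determinant.det SR \<noteq> 0"
proof -
  have "Determinant.det SRi * Determinant.det SR = 1"
    using det_mult[OF SRi_carrier SR_carrier] SRi_SR by simp
  thus ?thesis by auto
qed

lemma det_PL: "Determinant.det (PL1 a) = (Nf a)^2 + 4*(Tf a)^2" "Determinant.det (PL2 a) = (Nf a)^2 + 4*(Tf a)^2"
  "Determinant.det (PR1 a) = (Nf a)^2 + 4*(Tf a)^2" "Determinant.det (PR2 a) = (Nf a)^2 + 4*(Tf a)^2"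
  unfolding PL1_def PL2_def PR1_def PR2_def det4cf Nf_def Tf_def by (simp_all add: power2_eq_square algebra_simps)

lemma detL: "det (Lmat a) = ((Nf a)^2 + 4*(Tf a)^2)^2"
proof -
  have e: "Matrix.mat 8 8 (\<lambda>(i,j). Lmat a $ h8 i $ h8 j) = LMx a"
    by (rule eq_matI) (simp_all add: LMx_def Lmat_entry bs_tbl xor8)
  have 1: "det (Lmat a) = Determinant.det (LMx a)" using det_bridge[of "Lmat a"] e by simp
  have x: "Determinant.det (LMx a * SL) = Determinant.det (LMx a) * Determinant.det SL"
    by (rule det_mult[OF LMx_carrier SL_carrier])
  have y: "Determinant.det (SL * DL a) = Determinant.det SL * Determinant.det (DL a)"
    by (rule det_mult[OF SL_carrier DL_carrier])
  have "Determinant.det (LMx a) * Determinant.det SL = Determinant.det SL * Determinant.det (DL a)"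
    by (metis x y LS)
  hence 2: "Determinant.det (LMx a) = Determinant.det (DL a)" using det_SL_nz by (metis mult.commute mult_cancel_left)
  have 3: "DL a = BL a" by (rule mat8_eqI[OF DL_carrier BL_carrier DL_BL_entries])
  have 4: "Determinant.det (BL a) = Determinant.det (PL1 a) * Determinant.det (PL2 a)"
    unfolding BL_def by (rule det_four_block_mat_upper_right_zero[OF PL_carrier(1) refl _ PL_carrier(2)]) simp
  show ?thesis using 1 2 3 4 det_PL by (simp add: power2_eq_square)
qed

lemma detR: "det (Rmat a) = ((Nf a)^2 + 4*(Tf a)^2)^2"
proof -
  have e: "Matrix.mat 8 8 (\<lambda>(i,j). Rmat a $ h8 i $ h8 j) = RMx a"
    by (rule eq_matI) (simp_all add: RMx_def Rmat_entry bs_tbl xor8)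
  have 1: "det (Rmat a) = Determinant.det (RMx a)" using det_bridge[of "Rmat a"] e by simp
  have x: "Determinant.det (RMx a * SR) = Determinant.det (RMx a) * Determinant.det SR"
    by (rule det_mult[OF RMx_carrier SR_carrier])
  have y: "Determinant.det (SR * DR a) = Determinant.det SR * Determinant.det (DR a)"
    by (rule det_mult[OF SR_carrier DR_carrier])
  have "Determinant.det (RMx a) * Determinant.det SR = Determinant.det SR * Determinant.det (DR a)"
    by (metis x y RS)
  hence 2: "Determinant.det (RMx a) = Determinant.det (DR a)" using det_SR_nz by (metis mult.commute mult_cancel_left)
  have 3: "DR a = BR a" by (rule mat8_eqI[OF DR_carrier BR_carrier DR_BR_entries])
  have 4: "Determinant.det (BR a) = Determinant.det (PR1 a) * Determinant.det (PR2 a)"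
    unfolding BR_def by (rule det_four_block_mat_upper_right_zero[OF PL_carrier(3) refl _ PL_carrier(4)]) simp
  show ?thesis using 1 2 3 4 det_PL by (simp add: power2_eq_square)
qed

theorem proposition2p4:
  fixes a :: cl12
  shows "det (Lmat a) = det (Rmat a) \<and> det (Rmat a) = ((Nf a)^2 + 4 * (Tf a)^2)^2
         \<and> ((Nf a)^2 + 4 * (Tf a)^2)^2 = (Pf a)^2"
  using detL[of a] detR[of a] by (simp add: Pf_def)
end
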